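(* Let $d\ge2$ be an integer and consider the cone percolation process with radius of influence $R$ on the homogeneous tree $\mathbb{T}_d$, with law $\mathbb{P}$ and survival event $V$. Let $\rho$ be the smallest non-negative root of $\mathbb{E}(\rho^{d^R})+(1-\rho)p_0=\rho$ and $\psi$ the smallest non-negative root of $\mathbb{E}\big(\psi^{\sum_{m=1}^{R}d^m}\big)=\psi$ (an empty sum being $0$). Then $$1-\big(1-\rho^{\frac{d+1}{d}}\big)p_0-\mathbb{E}\Big(\rho^{\frac{d+1}{d}d^R}\Big)\ \le\ \mathbb{P}(V)\ \le\ 1-\mathbb{E}\Big(\psi^{\frac{d+1}{d-1}(d^R-1)}\Big).$$
   Context: Cone percolation process: Let $\mathbb{T}$ be a tree with origin $\mathcal{O}$ and graph distance $d(\cdot,\cdot)$. Write $u\le v$ if $u$ lies on the path from $\mathcal{O}$ to $v$. Let $R$ be a random variable with values in $\{0,1,2,\dots\}$, $p_k=\mathbb{P}(R=k)$, and assume $p_0\in(0,1)$. Let $\{R_v\}$ be i.i.d. copies of $R$ indexed by the vertices. For each vertex $u$ let $B_u=\{v: u\le v,\ d(u,v)\le R_u\}$. Set $I_0=\{\mathcal{O}\}$, $I_{n+1}=\bigcup_{u\in I_n}B_u$, $I=\bigcup_n I_n$; survival is the event $V=\{|I|=\infty\}$. $\mathbb{T}_d$ is the tree in which every vertex has degree $d+1$, with origin $\mathcal{O}$. *)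

theory Defs
  imports "HOL-Probability.Probability"
begin

text \<open>Vertices of the homogeneous tree T_d (every vertex has degree d+1) are encoded as
  lists of naturals, the path from the origin []: the origin has children 0..d,
  every other vertex has children 0..d-1.  u \<le> v iff u is a prefix of v, and then
  the graph distance d(u,v) = length v - length u.\<close>

definition tree_vertex :: "nat \<Rightarrow> nat list \<Rightarrow> bool" where
  "tree_vertex d xs \<longleftrightarrow> xs = [] \<or> (hd xs \<le> d \<and> (\<forall>x\<in>set (tl xs). x < d))"

text \<open>The cone B_u = {v : u \<le> v, d(u,v) \<le> R_u}, where the sample omega assigns to every
  vertex its radius R_v.\<close>

definition cone :: "nat \<Rightarrow> (nat list \<Rightarrow> nat) \<Rightarrow> nat list \<Rightarrow> nat list set" where
  "cone d \<omega> u = {v. tree_vertex d v \<and> prefix u v \<and> length v - length u \<le> \<omega> u}"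

fun cone_gen :: "nat \<Rightarrow> (nat list \<Rightarrow> nat) \<Rightarrow> nat \<Rightarrow> nat list set" where
  "cone_gen d \<omega> 0 = {[]}"
| "cone_gen d \<omega> (Suc n) = (\<Union>u\<in>cone_gen d \<omega> n. cone d \<omega> u)"

definition cone_cluster :: "nat \<Rightarrow> (nat list \<Rightarrow> nat) \<Rightarrow> nat list set" where
  "cone_cluster d \<omega> = (\<Union>n. cone_gen d \<omega> n)"

text \<open>Law of the process: i.i.d. radii with law p at every vertex (indexed by all lists;
  only tree vertices are ever used).\<close>

definition cone_space :: "nat pmf \<Rightarrow> (nat list \<Rightarrow> nat) measure" where
  "cone_space p = (\<Pi>\<^sub>M v\<in>UNIV. measure_pmf p)"

definition survival :: "nat \<Rightarrow> nat pmf \<Rightarrow> (nat list \<Rightarrow> nat) set" where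
  "survival d p = {\<omega> \<in> space (cone_space p). infinite (cone_cluster d \<omega>)}"

end

theory Submission
  imports Defs
begin

definition sh :: "nat list \<Rightarrow> (nat list \<Rightarrow> nat) \<Rightarrow> (nat list \<Rightarrow> nat)" where
  "sh u \<omega> = (\<lambda>s. \<omega> (u @ s))"

lemma shift_apply[simp]: "sh u \<omega> s = \<omega> (u @ s)" by (simp add: sh_def)
lemma shift_shift[simp]: "sh u (sh v \<omega>) = sh (v @ u) \<omega>" by (simp add: sh_def)
lemma shift_Nil[simp]: "sh [] \<omega> = \<omega>" by (simp add: sh_def)

lemma space_cone[simp]: "space (cone_space p) = UNIV"
  by (simp add: cone_space_def space_PiM PiE_def extensional_def)

lemma sets_cone: "sets (cone_space p) = sets (\<Pi>\<^sub>M v\<in>UNIV. measure_pmf p)"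
  by (simp add: cone_space_def)

lemma prob_space_cone: "prob_space (cone_space p)"
  unfolding cone_space_def by (intro prob_space_PiM) (simp add: prob_space_measure_pmf)

lemma measurable_cone_eq: "measurable (cone_space p) N = measurable (\<Pi>\<^sub>M v\<in>UNIV. measure_pmf p) N"
  by (simp add: cone_space_def)

lemma meas_comp_PiM: "(\<lambda>\<omega>. \<omega> v) \<in> measurable (\<Pi>\<^sub>M v\<in>UNIV. measure_pmf p) (count_space UNIV)"
proof -
  have "(\<lambda>\<omega>. \<omega> v) \<in> measurable (\<Pi>\<^sub>M v\<in>UNIV. measure_pmf p) (measure_pmf p)"
    by (rule measurable_component_singleton) simp
  moreover have "sets (measure_pmf p) = sets (count_space UNIV)" by simp
  ultimately show ?thesis
    using measurable_cong_sets[OF refl, of "measure_pmf p" "count_space UNIV" "\<Pi>\<^sub>M v\<in>UNIV. measure_pmf p"]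
    by simp
qed

lemma measurable_coord[measurable]:
  "(\<lambda>\<omega>. \<omega> v) \<in> measurable (cone_space p) (count_space UNIV)"
  unfolding measurable_cone_eq by (rule meas_comp_PiM)

lemma measurable_shift[measurable]: "sh u \<in> measurable (cone_space p) (cone_space p)"
proof -
  have "(\<lambda>\<omega> s. \<omega> (u @ s)) \<in> measurable (\<Pi>\<^sub>M v\<in>UNIV. measure_pmf p) (\<Pi>\<^sub>M v\<in>UNIV. measure_pmf p)"
  proof (rule measurable_PiM_single')
    fix s :: "nat list"
    have "(\<lambda>\<omega>. \<omega> (u @ s)) \<in> measurable (\<Pi>\<^sub>M v\<in>UNIV. measure_pmf p) (measure_pmf p)"
      by (rule measurable_component_singleton) simp
    then show "(\<lambda>\<omega>. \<omega> (u @ s)) \<in> measurable (\<Pi>\<^sub>M v\<in>UNIV. measure_pmf p) (measure_pmf p)" .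
  qed (simp add: space_PiM)
  then show ?thesis unfolding cone_space_def sh_def[abs_def] .
qed

lemma pred_shift: "Q \<in> measurable (cone_space p) (count_space UNIV) \<Longrightarrow> (\<lambda>\<omega>. Q (sh u \<omega>)) \<in> measurable (cone_space p) (count_space UNIV)"
  using measurable_compose[OF measurable_shift] by blast

lemma distr_shift: "distr (cone_space p) (cone_space p) (sh u) = cone_space p"
proof -
  have "distr (\<Pi>\<^sub>M v\<in>UNIV. measure_pmf p) (\<Pi>\<^sub>M i\<in>UNIV. measure_pmf p) (\<lambda>\<omega>. \<lambda>n\<in>UNIV. \<omega> (u @ n))
     = (\<Pi>\<^sub>M i\<in>UNIV. measure_pmf p)"
    by (rule distr_PiM_reindex[where f="\<lambda>n. u @ n" and M="\<lambda>_. measure_pmf p", simplified])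
       (auto simp: prob_space_measure_pmf inj_on_def)
  moreover have "(\<lambda>\<omega>. \<lambda>n\<in>UNIV. \<omega> (u @ n)) = sh u" by (auto simp: fun_eq_iff)
  ultimately show ?thesis by (simp add: cone_space_def)
qed

lemma measure_shift: "B \<in> sets (cone_space p) \<Longrightarrow> measure (cone_space p) (sh u -` B) = measure (cone_space p) B"
proof -
  assume B: "B \<in> sets (cone_space p)"
  have "measure (cone_space p) B = measure (distr (cone_space p) (cone_space p) (sh u)) B"
    by (simp add: distr_shift)
  also have "\<dots> = measure (cone_space p) (sh u -` B \<inter> space (cone_space p))"
    by (rule measure_distr) (use B in auto)
  finally show ?thesis by simp
qed

lemma measure_root: "measure (cone_space p) {\<omega>. \<omega> [] = k} = pmf p k"
proof -
  have "distr (\<Pi>\<^sub>M v\<in>UNIV. measure_pmf p) (measure_pmf p) (\<lambda>\<omega>::nat list \<Rightarrow> nat. \<omega> []) = measure_pmf p"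
    by (rule distr_PiM_component[where M="\<lambda>_. measure_pmf p"]) (auto simp: prob_space_measure_pmf)
  then have "measure (measure_pmf p) {k} = measure (distr (\<Pi>\<^sub>M v\<in>UNIV. measure_pmf p) (measure_pmf p) (\<lambda>\<omega>::nat list \<Rightarrow> nat. \<omega> [])) {k}"
    by (simp only:)
  also have "\<dots> = measure (\<Pi>\<^sub>M v\<in>UNIV. measure_pmf p) ((\<lambda>\<omega>::nat list \<Rightarrow> nat. \<omega> []) -` {k} \<inter> space (\<Pi>\<^sub>M v\<in>UNIV. measure_pmf p))"
    by (rule measure_distr) (auto intro: meas_comp_PiM)
  finally show ?thesis
    by (simp add: cone_space_def[symmetric] measure_pmf_single vimage_def)
qed

lemma meas_comp_PiM': "v \<in> I \<Longrightarrow> (\<lambda>\<omega>. \<omega> v) \<in> measurable (\<Pi>\<^sub>M v\<in>I. measure_pmf p) (count_space UNIV)"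
proof -
  assume v: "v \<in> I"
  have "(\<lambda>\<omega>. \<omega> v) \<in> measurable (\<Pi>\<^sub>M v\<in>I. measure_pmf p) (measure_pmf p)"
    by (rule measurable_component_singleton) (rule v)
  moreover have "sets (measure_pmf p) = sets (count_space UNIV)" by simp
  ultimately show ?thesis
    using measurable_cong_sets[OF refl, of "measure_pmf p" "count_space UNIV" "\<Pi>\<^sub>M v\<in>I. measure_pmf p"]
    by simp
qed

lemma indep_coords:
  "prob_space.indep_vars (cone_space p) (\<lambda>_. measure_pmf p) (\<lambda>v \<omega>. \<omega> v) UNIV"
proof -
  interpret prob_space "cone_space p" by (rule prob_space_cone)
  have rv: "\<And>v. random_variable (measure_pmf p) (\<lambda>\<omega>. \<omega> v)"
    unfolding measurable_cone_eq by (rule measurable_component_singleton) simp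
  have d: "distr (cone_space p) (measure_pmf p) (\<lambda>\<omega>. \<omega> v) = measure_pmf p" for v
    unfolding cone_space_def
    by (rule distr_PiM_component[where M="\<lambda>_. measure_pmf p"]) (auto simp: prob_space_measure_pmf)
  have "distr (cone_space p) (\<Pi>\<^sub>M i\<in>UNIV. measure_pmf p) (\<lambda>x. \<lambda>i\<in>UNIV. x i) = cone_space p"
  proof -
    have "(\<lambda>x::nat list \<Rightarrow> nat. \<lambda>i\<in>UNIV. x i) = (\<lambda>x. x)" by (auto simp: restrict_def fun_eq_iff)
    then show ?thesis by (simp add: cone_space_def distr_id2)
  qed
  then show ?thesis
    apply (subst indep_vars_iff_distr_eq_PiM[OF _ rv], simp)
    apply (simp only: d)
    apply (simp add: cone_space_def)
    done
qed

lemma indep_root_children: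
  fixes C :: "nat set" and B :: "nat \<Rightarrow> (nat list \<Rightarrow> nat) set"
  assumes C: "finite C" and B: "\<And>c. c \<in> C \<Longrightarrow> B c \<in> sets (cone_space p)"
  shows "measure (cone_space p) {\<omega>. \<omega> [] = k \<and> (\<forall>c\<in>C. sh [c] \<omega> \<in> B c)}
       = pmf p k * (\<Prod>c\<in>C. measure (cone_space p) (B c))"
proof -
  let ?M = "cone_space p"
  interpret prob_space ?M by (rule prob_space_cone)
  define K where "K = (\<lambda>j::nat option. case j of None \<Rightarrow> {[]::nat list} | Some c \<Rightarrow> {xs. xs \<noteq> [] \<and> hd xs = c})"
  define L where "L = insert None (Some ` C)"
  define Y where "Y = (\<lambda>j::nat option. case j of None \<Rightarrow> (\<lambda>(y::nat list \<Rightarrow> nat) (s::nat list). y [])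
                           | Some c \<Rightarrow> (\<lambda>y s. y (c # s)))"
  define A where "A = (\<lambda>j::nat option. case j of None \<Rightarrow> {f::nat list \<Rightarrow> nat. f [] = k} | Some c \<Rightarrow> B c)"
  have ind1: "indep_vars (\<lambda>j. \<Pi>\<^sub>M i\<in>K j. measure_pmf p) (\<lambda>j \<omega>. restrict (\<lambda>i. \<omega> i) (K j)) L"
    by (rule indep_vars_restrict[OF indep_coords]) (auto simp: K_def L_def disjoint_family_on_def split: option.splits)
  have Ymeas: "Y j \<in> measurable (\<Pi>\<^sub>M i\<in>K j. measure_pmf p) ?M" if "j \<in> L" for j
  proof (cases j)
    case None
    have "(\<lambda>(y::nat list \<Rightarrow> nat) (s::nat list). y []) \<in> measurable (\<Pi>\<^sub>M i\<in>K j. measure_pmf p) (\<Pi>\<^sub>M v\<in>UNIV. measure_pmf p)"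
      by (rule measurable_PiM_single') (auto intro!: meas_comp_PiM' simp: None K_def space_PiM)
    then show ?thesis by (simp add: None Y_def cone_space_def)
  next
    case (Some c)
    have "(\<lambda>(y::nat list \<Rightarrow> nat) s. y (c # s)) \<in> measurable (\<Pi>\<^sub>M i\<in>K j. measure_pmf p) (\<Pi>\<^sub>M v\<in>UNIV. measure_pmf p)"
      by (rule measurable_PiM_single') (auto intro!: meas_comp_PiM' simp: Some K_def space_PiM)
    then show ?thesis by (simp add: Some Y_def cone_space_def)
  qed
  have ind2: "indep_vars (\<lambda>_. ?M) (\<lambda>j \<omega>. Y j (restrict (\<lambda>i. \<omega> i) (K j))) L"
    by (rule indep_vars_compose2[OF ind1 Ymeas])
  have Asets: "A j \<in> sets ?M" if "j \<in> L" for j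
  proof (cases j)
    case None
    have "{f::nat list \<Rightarrow> nat. f [] = k} = (\<lambda>f. f []) -` {k} \<inter> space ?M" by auto
    also have "\<dots> \<in> sets ?M" by (rule measurable_sets[OF measurable_coord]) simp
    finally show ?thesis by (simp add: A_def None)
  next
    case (Some c) then show ?thesis using that B by (auto simp: A_def L_def)
  qed
  have eqY: "\<And>\<omega>. Y None (restrict (\<lambda>i. \<omega> i) (K None)) = (\<lambda>s. \<omega> [])"
    "\<And>\<omega> c. Y (Some c) (restrict (\<lambda>i. \<omega> i) (K (Some c))) = sh [c] \<omega>"
    by (auto simp: Y_def K_def fun_eq_iff)
  have "(\<Inter>j\<in>L. (\<lambda>\<omega>. Y j (restrict (\<lambda>i. \<omega> i) (K j))) -` A j \<inter> space ?M)
      = {\<omega>. \<omega> [] = k \<and> (\<forall>c\<in>C. sh [c] \<omega> \<in> B c)}"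
    by (auto simp: L_def eqY A_def)
  moreover have "prob (\<Inter>j\<in>L. (\<lambda>\<omega>. Y j (restrict (\<lambda>i. \<omega> i) (K j))) -` A j \<inter> space ?M)
     = (\<Prod>j\<in>L. prob ((\<lambda>\<omega>. Y j (restrict (\<lambda>i. \<omega> i) (K j))) -` A j \<inter> space ?M))"
    by (rule indep_varsD[OF ind2]) (auto simp: L_def C Asets)
  moreover have "(\<Prod>j\<in>L. prob ((\<lambda>\<omega>. Y j (restrict (\<lambda>i. \<omega> i) (K j))) -` A j \<inter> space ?M))
      = prob {\<omega>. \<omega> [] = k} * (\<Prod>c\<in>C. prob (sh [c] -` B c))"
  proof -
    have "(\<Prod>j\<in>L. prob ((\<lambda>\<omega>. Y j (restrict (\<lambda>i. \<omega> i) (K j))) -` A j \<inter> space ?M))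
       = prob ((\<lambda>\<omega>. Y None (restrict (\<lambda>i. \<omega> i) (K None))) -` A None \<inter> space ?M)
         * (\<Prod>j\<in>Some ` C. prob ((\<lambda>\<omega>. Y j (restrict (\<lambda>i. \<omega> i) (K j))) -` A j \<inter> space ?M))"
      unfolding L_def using C by (subst prod.insert) auto
    also have "(\<Prod>j\<in>Some ` C. prob ((\<lambda>\<omega>. Y j (restrict (\<lambda>i. \<omega> i) (K j))) -` A j \<inter> space ?M))
       = (\<Prod>c\<in>C. prob (sh [c] -` B c))"
      by (subst prod.reindex) (auto simp: eqY A_def)
    also have "(\<lambda>\<omega>. Y None (restrict (\<lambda>i. \<omega> i) (K None))) -` A None \<inter> space ?M = {\<omega>. \<omega> [] = k}"
      by (auto simp: eqY A_def)
    finally show ?thesis .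
  qed
  ultimately show ?thesis
    using B by (simp add: measure_root measure_shift)
qed

lemma decomp_root:
  fixes E :: "(nat list \<Rightarrow> nat) set" and C :: "nat \<Rightarrow> nat set"
  assumes E: "E \<in> sets (cone_space p)"
    and eq: "\<And>k. E \<inter> {\<omega>. \<omega> [] = k} = (if cond k then {\<omega>. \<omega> [] = k \<and> (\<forall>c\<in>C k. sh [c] \<omega> \<in> B k c)} else {})"
    and C: "\<And>k. finite (C k)" and B: "\<And>k c. c \<in> C k \<Longrightarrow> B k c \<in> sets (cone_space p)"
  shows "(\<lambda>k. if cond k then pmf p k * (\<Prod>c\<in>C k. measure (cone_space p) (B k c)) else 0)
          sums measure (cone_space p) E"
proof -
  interpret prob_space "cone_space p" by (rule prob_space_cone)
  have root_sets: "{\<omega>. \<omega> [] = k} \<in> sets (cone_space p)" for k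
  proof -
    have "{\<omega>. \<omega> [] = k} = (\<lambda>f. f []) -` {k} \<inter> space (cone_space p)" by auto
    also have "\<dots> \<in> sets (cone_space p)" by (rule measurable_sets[OF measurable_coord]) simp
    finally show ?thesis .
  qed
  have "(\<lambda>k. measure (cone_space p) (E \<inter> {\<omega>. \<omega> [] = k})) sums measure (cone_space p) (\<Union>k. E \<inter> {\<omega>. \<omega> [] = k})"
    by (rule finite_measure_UNION) (auto simp: disjoint_family_on_def E root_sets)
  moreover have "(\<Union>k. E \<inter> {\<omega>. \<omega> [] = k}) = E" by auto
  moreover have "measure (cone_space p) (E \<inter> {\<omega>. \<omega> [] = k})
     = (if cond k then pmf p k * (\<Prod>c\<in>C k. measure (cone_space p) (B k c)) else 0)" for k
    by (simp add: eq indep_root_children C B)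
  ultimately show ?thesis by simp
qed

lemma pmf_expectation_sums:
  fixes f :: "nat \<Rightarrow> real" assumes bnd: "\<And>k. \<bar>f k\<bar> \<le> Bd"
  shows "(\<lambda>k. pmf p k * f k) sums measure_pmf.expectation p f"
proof -
  have int: "integrable (measure_pmf p) f"
    by (intro measure_pmf.integrable_const_bound[where B=Bd]) (auto simp: bnd)
  have e1: "measure_pmf.expectation p f = (LINT k|count_space UNIV. pmf p k *\<^sub>R f k)"
    unfolding measure_pmf_eq_density by (subst integral_density) auto
  have i2: "integrable (count_space UNIV) (\<lambda>k. pmf p k *\<^sub>R f k)"
    using int unfolding measure_pmf_eq_density by (subst (asm) integrable_density) auto
  show ?thesis using sums_integral_count_space_nat[OF i2] e1 by simp
qed

lemma pmf_sums_one: "(\<lambda>k. pmf p k) sums 1"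
  using pmf_expectation_sums[of "\<lambda>_. 1" 1 p] by simp

function (sequential) H :: "nat \<Rightarrow> nat \<Rightarrow> nat \<Rightarrow> (nat list \<Rightarrow> nat) \<Rightarrow> bool" where
  "H d n (Suc m) \<omega> = (\<exists>c<d. H d n m (sh [c] \<omega>))"
| "H d 0 0 \<omega> = True"
| "H d (Suc n) 0 \<omega> = (\<omega> [] \<noteq> 0 \<and> H d n (\<omega> []) \<omega>)"
  by pat_completeness auto
termination by (relation "measures [\<lambda>(d,n,m,\<omega>). n, \<lambda>(d,n,m,\<omega>). m]") auto

fun Groot :: "nat \<Rightarrow> nat \<Rightarrow> (nat list \<Rightarrow> nat) \<Rightarrow> bool" where
  "Groot d 0 \<omega> = True"
| "Groot d (Suc n) \<omega> = (\<omega> [] \<noteq> 0 \<and> (\<exists>c\<le>d. H d n (\<omega> [] - 1) (sh [c] \<omega>)))"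

lemma pred_ex_child:
  assumes "\<And>c. Measurable.pred (cone_space p) (Q c)"
  shows "Measurable.pred (cone_space p) (\<lambda>\<omega>. \<exists>c<d. Q c (sh [c] \<omega>))"
proof -
  have [measurable]: "Measurable.pred (cone_space p) (\<lambda>\<omega>. Q c (sh [c] \<omega>))" for c
    by (rule pred_shift) (rule assms)
  show ?thesis by measurable
qed

lemma pred_ex_child_le:
  assumes "\<And>c. Measurable.pred (cone_space p) (Q c)"
  shows "Measurable.pred (cone_space p) (\<lambda>\<omega>. \<exists>c\<le>d. Q c (sh [c] \<omega>))"
proof -
  have [measurable]: "Measurable.pred (cone_space p) (\<lambda>\<omega>. Q c (sh [c] \<omega>))" for c
    by (rule pred_shift) (rule assms)
  show ?thesis by measurable
qed

lemma H_meas: "Measurable.pred (cone_space p) (H d n m)"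
proof (induction n arbitrary: m)
  case 0
  show ?case
  proof (induction m)
    case 0 then show ?case by simp
  next
    case (Suc m)
    have "H d 0 (Suc m) = (\<lambda>\<omega>. \<exists>c<d. H d 0 m (sh [c] \<omega>))" by (simp add: fun_eq_iff)
    then show ?case using pred_ex_child[of "\<lambda>_. H d 0 m"] Suc by simp
  qed
next
  case (Suc n)
  note IH[measurable] = Suc
  show ?case
  proof (induction m)
    case 0
    have "H d (Suc n) 0 = (\<lambda>\<omega>. \<omega> [] \<noteq> 0 \<and> (\<exists>k. \<omega> [] = k \<and> H d n k \<omega>))" by (simp add: fun_eq_iff)
    moreover have "Measurable.pred (cone_space p) (\<lambda>\<omega>. \<omega> [] \<noteq> 0 \<and> (\<exists>k. \<omega> [] = k \<and> H d n k \<omega>))"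
      by measurable
    ultimately show ?case by simp
  next
    case (Suc m)
    have "H d (Suc n) (Suc m) = (\<lambda>\<omega>. \<exists>c<d. H d (Suc n) m (sh [c] \<omega>))" by (simp add: fun_eq_iff)
    then show ?case using pred_ex_child[of "\<lambda>_. H d (Suc n) m"] Suc by simp
  qed
qed

lemma Groot_meas: "Measurable.pred (cone_space p) (Groot d n)"
proof (cases n)
  case 0
  have "Groot d 0 = (\<lambda>_. True)" by (simp add: fun_eq_iff)
  then show ?thesis using 0 by simp
next
  case (Suc n)
  define Q where "Q = (\<lambda>k \<omega>. \<exists>c\<le>d. H d n k (sh [c] \<omega>))"
  have [measurable]: "Measurable.pred (cone_space p) (Q k)" for k
    unfolding Q_def by (rule pred_ex_child_le) (rule H_meas)
  have "Groot d (Suc n) \<omega> = (\<exists>k. \<omega> [] = Suc k \<and> Q k \<omega>)" for \<omega>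
    by (cases "\<omega> []") (auto simp: Q_def)
  then have "Groot d (Suc n) = (\<lambda>\<omega>. \<exists>k. \<omega> [] = Suc k \<and> Q k \<omega>)"
    by (simp add: fun_eq_iff)
  moreover have "Measurable.pred (cone_space p) (\<lambda>\<omega>. \<exists>k. \<omega> [] = Suc k \<and> Q k \<omega>)"
    by measurable
  ultimately show ?thesis using Suc by simp
qed

lemma pred_sets: "Measurable.pred (cone_space p) Q \<Longrightarrow> {\<omega>. Q \<omega>} \<in> sets (cone_space p)"
proof -
  assume Q: "Measurable.pred (cone_space p) Q"
  have "Q -` {True} \<inter> space (cone_space p) \<in> sets (cone_space p)"
    by (rule measurable_sets[OF Q]) simp
  moreover have "Q -` {True} \<inter> space (cone_space p) = {\<omega>. Q \<omega>}" by auto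
  ultimately show ?thesis by simp
qed

lemma pred_sets_not: "Measurable.pred (cone_space p) Q \<Longrightarrow> {\<omega>. \<not> Q \<omega>} \<in> sets (cone_space p)"
  by (rule pred_sets) measurable

lemma measure_not: "Measurable.pred (cone_space p) Q \<Longrightarrow>
   measure (cone_space p) {\<omega>. \<not> Q \<omega>} = 1 - measure (cone_space p) {\<omega>. Q \<omega>}"
proof -
  assume Q: "Measurable.pred (cone_space p) Q"
  interpret prob_space "cone_space p" by (rule prob_space_cone)
  have "{\<omega>. \<not> Q \<omega>} = space (cone_space p) - {\<omega>. Q \<omega>}" by auto
  then show ?thesis using prob_compl[OF pred_sets[OF Q]] by simp
qed

definition aa :: "nat \<Rightarrow> nat pmf \<Rightarrow> nat \<Rightarrow> real" where
  "aa d p n = measure (cone_space p) {\<omega>. \<not> H d n 0 \<omega>}"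

lemma PH: "measure (cone_space p) {\<omega>. \<not> H d n m \<omega>} = aa d p n ^ (d ^ m)"
proof (induction m)
  case 0 then show ?case by (simp add: aa_def)
next
  case (Suc m)
  have "(\<lambda>k. if True then pmf p k * (\<Prod>c\<in>{..<d}. measure (cone_space p) {\<omega>. \<not> H d n m \<omega>}) else 0)
     sums measure (cone_space p) {\<omega>. \<not> H d n (Suc m) \<omega>}"
    by (rule decomp_root[OF pred_sets_not[OF H_meas]]) (auto simp only: pred_sets_not[OF H_meas], auto)
  then have "(\<lambda>k. pmf p k * (aa d p n ^ (d ^ m)) ^ d) sums measure (cone_space p) {\<omega>. \<not> H d n (Suc m) \<omega>}"
    by (simp add: Suc)
  moreover have "(\<lambda>k. pmf p k * (aa d p n ^ (d ^ m)) ^ d) sums (aa d p n ^ (d ^ m)) ^ d"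
    using sums_mult2[OF pmf_sums_one] by simp
  ultimately have "measure (cone_space p) {\<omega>. \<not> H d n (Suc m) \<omega>} = (aa d p n ^ (d ^ m)) ^ d"
    by (rule sums_unique2)
  also have "\<dots> = aa d p n ^ (d ^ Suc m)" by (simp add: power_mult[symmetric] mult.commute)
  finally show ?case .
qed

lemma PG: "(\<lambda>k. pmf p k * (if k = 0 then 1 else aa d p n ^ (d ^ k))) sums aa d p (Suc n)"
proof -
  have S: "(\<lambda>k. if True then pmf p k * (\<Prod>c\<in>(if k = 0 then {} else {..<d}). measure (cone_space p) {\<omega>. \<not> H d n (k - 1) \<omega>}) else 0)
     sums measure (cone_space p) {\<omega>. \<not> H d (Suc n) 0 \<omega>}"
  proof (rule decomp_root[OF pred_sets_not[OF H_meas]])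
    fix k
    show "{\<omega>. \<not> H d (Suc n) 0 \<omega>} \<inter> {\<omega>. \<omega> [] = k} =
      (if True then {\<omega>. \<omega> [] = k \<and> (\<forall>c\<in>(if k = 0 then {} else {..<d}). sh [c] \<omega> \<in> {\<omega>. \<not> H d n (k - 1) \<omega>})} else {})"
      by (cases k) auto
  qed (simp_all only: pred_sets_not[OF H_meas] finite.emptyI finite_lessThan if_True if_False split: if_split, simp_all)
  have eq: "(if True then pmf p k * (\<Prod>c\<in>(if k = 0 then {} else {..<d}). measure (cone_space p) {\<omega>. \<not> H d n (k - 1) \<omega>}) else 0)
      = pmf p k * (if k = 0 then 1 else aa d p n ^ (d ^ k))" for k
  proof (cases k)
    case 0 then show ?thesis by simp
  next
    case (Suc k')
    have "(\<Prod>c\<in>{..<d}. measure (cone_space p) {\<omega>. \<not> H d n k' \<omega>}) = (aa d p n ^ (d ^ k')) ^ d"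
      by (simp add: PH)
    also have "\<dots> = aa d p n ^ (d ^ Suc k')" by (simp add: power_mult[symmetric] mult.commute)
    finally show ?thesis using Suc by simp
  qed
  show ?thesis using S unfolding eq by (simp add: aa_def)
qed

declare shift_apply[simp del]

lemma sh_Nil_apply[simp]: "sh x \<omega> [] = \<omega> x" by (simp add: shift_apply)

section \<open>Survival measurability\<close>

lemma coord_pred: "Measurable.pred (cone_space p) (\<lambda>\<omega>. g (\<omega> u))"
  by (rule measurable_compose[OF measurable_coord]) simp

lemma cg_meas: "Measurable.pred (cone_space p) (\<lambda>\<omega>. v \<in> cone_gen d \<omega> n)"
proof (induction n arbitrary: v)
  case 0 then show ?case by simp
next
  case (Suc n)
  have eq: "(\<lambda>\<omega>. v \<in> cone_gen d \<omega> (Suc n)) =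
     (\<lambda>\<omega>. \<exists>u. u \<in> cone_gen d \<omega> n \<and> (tree_vertex d v \<and> prefix u v \<and> length v - length u \<le> \<omega> u))"
    by (auto simp: fun_eq_iff cone_def)
  have [measurable]: "Measurable.pred (cone_space p) (\<lambda>\<omega>. u \<in> cone_gen d \<omega> n)" for u
    by (rule Suc.IH)
  have [measurable]: "Measurable.pred (cone_space p) (\<lambda>\<omega>. length v - length u \<le> \<omega> u)" for u
    by (rule coord_pred)
  show ?case unfolding eq by measurable
qed

lemma tree_vertex_Nil: "tree_vertex d []" by (simp add: tree_vertex_def)

lemma cg_tree: "v \<in> cone_gen d \<omega> n \<Longrightarrow> tree_vertex d v"
  by (induction n arbitrary: v) (auto simp: tree_vertex_Nil cone_def)

lemma tree_set: "tree_vertex d v \<Longrightarrow> set v \<subseteq> {..d}"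
  by (cases v) (auto simp: tree_vertex_def)

lemma finite_bounded_iff:
  "infinite (cone_cluster d \<omega>) \<longleftrightarrow> (\<forall>N. \<exists>v. N \<le> length v \<and> (\<exists>n. v \<in> cone_gen d \<omega> n))"
proof
  assume inf: "infinite (cone_cluster d \<omega>)"
  show "\<forall>N. \<exists>v. N \<le> length v \<and> (\<exists>n. v \<in> cone_gen d \<omega> n)"
  proof (rule ccontr)
    assume "\<not> ?thesis"
    then obtain N where N: "\<And>v n. v \<in> cone_gen d \<omega> n \<Longrightarrow> length v < N" by (meson not_le)
    have "cone_cluster d \<omega> \<subseteq> {xs. set xs \<subseteq> {..d} \<and> length xs \<le> N}"
      using N cg_tree tree_set by (fastforce simp: cone_cluster_def less_imp_le)
    moreover have "finite {xs. set xs \<subseteq> {..d} \<and> length xs \<le> N}"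
      by (rule finite_lists_length_le) simp
    ultimately show False using inf finite_subset by blast
  qed
next
  assume unb: "\<forall>N. \<exists>v. N \<le> length v \<and> (\<exists>n. v \<in> cone_gen d \<omega> n)"
  show "infinite (cone_cluster d \<omega>)"
  proof
    assume fin: "finite (cone_cluster d \<omega>)"
    define N where "N = Suc (Max (length ` cone_cluster d \<omega>))"
    obtain v n where v: "N \<le> length v" "v \<in> cone_gen d \<omega> n" using unb by blast
    then have "v \<in> cone_cluster d \<omega>" by (auto simp: cone_cluster_def)
    then have "length v \<le> Max (length ` cone_cluster d \<omega>)" using fin by simp
    then show False using v by (simp add: N_def)
  qed
qed

lemma survival_eq: "survival d p = {\<omega>. \<forall>N. \<exists>v. N \<le> length v \<and> (\<exists>n. v \<in> cone_gen d \<omega> n)}"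
  by (auto simp: survival_def finite_bounded_iff)

lemma survival_sets: "survival d p \<in> sets (cone_space p)"
proof -
  have [measurable]: "Measurable.pred (cone_space p) (\<lambda>\<omega>. v \<in> cone_gen d \<omega> n)" for v n
    by (rule cg_meas)
  have "Measurable.pred (cone_space p) (\<lambda>\<omega>. \<forall>N. \<exists>v. N \<le> length v \<and> (\<exists>n. v \<in> cone_gen d \<omega> n))"
    by measurable
  then show ?thesis unfolding survival_eq by (rule pred_sets)
qed

section \<open>Lower bound: combinatorics\<close>

lemma tv_append: "tree_vertex d x \<Longrightarrow> x \<noteq> [] \<Longrightarrow> set s \<subseteq> {..<d} \<Longrightarrow> tree_vertex d (x @ s)"
  by (cases x) (auto simp: tree_vertex_def)

lemma H_walk: "H d n m (sh x \<omega>) \<Longrightarrow> \<exists>s. length s = m \<and> set s \<subseteq> {..<d} \<and> H d n 0 (sh (x @ s) \<omega>)"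
proof (induction m arbitrary: x)
  case 0 then show ?case by simp
next
  case (Suc m)
  then obtain c where c: "c < d" "H d n m (sh (x @ [c]) \<omega>)" by auto
  from Suc.IH[OF c(2)] obtain s where "length s = m" "set s \<subseteq> {..<d}" "H d n 0 (sh ((x @ [c]) @ s) \<omega>)"
    by blast
  then show ?case using c by (intro exI[of _ "c # s"]) auto
qed

lemma G_reach: "H d n 0 (sh x \<omega>) \<Longrightarrow> x \<noteq> [] \<Longrightarrow> tree_vertex d x \<Longrightarrow> x \<in> cone_gen d \<omega> M \<Longrightarrow>
   \<exists>y. y \<in> cone_gen d \<omega> (M + n) \<and> length x + n \<le> length y"
proof (induction n arbitrary: x M)
  case 0 then show ?case by auto
next
  case (Suc n)
  have "\<omega> x \<noteq> 0" and Hn: "H d n (\<omega> x) (sh x \<omega>)" using Suc.prems(1) by auto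
  from H_walk[OF Hn] obtain s where s: "length s = \<omega> x" "set s \<subseteq> {..<d}" "H d n 0 (sh (x @ s) \<omega>)"
    by blast
  have tv: "tree_vertex d (x @ s)" using tv_append Suc.prems s by blast
  have "x @ s \<in> cone d \<omega> x" using tv s by (simp add: cone_def)
  then have "x @ s \<in> cone_gen d \<omega> (Suc M)" using Suc.prems(4) by auto
  moreover have ne: "x @ s \<noteq> []" using Suc.prems(2) by simp
  ultimately obtain y where y1: "y \<in> cone_gen d \<omega> (Suc M + n)" and y2: "length (x @ s) + n \<le> length y"
    using Suc.IH[OF s(3) ne tv] by blast
  have eqn: "Suc M + n = M + Suc n" by simp
  have "y \<in> cone_gen d \<omega> (M + Suc n)" using y1 eqn by metis
  moreover have "length x + Suc n \<le> length y" using y2 \<open>\<omega> x \<noteq> 0\<close> s(1) by simp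
  ultimately show ?case by blast
qed

lemma Groot_reach: "Groot d (Suc n) \<omega> \<Longrightarrow> \<exists>y. y \<in> cone_gen d \<omega> (Suc n) \<and> Suc n \<le> length y"
proof -
  assume "Groot d (Suc n) \<omega>"
  then obtain c where c: "\<omega> [] \<noteq> 0" "c \<le> d" "H d n (\<omega> [] - 1) (sh [c] \<omega>)" by auto
  from H_walk[OF c(3)] obtain s where s: "length s = \<omega> [] - 1" "set s \<subseteq> {..<d}" "H d n 0 (sh ([c] @ s) \<omega>)"
    by blast
  have tv: "tree_vertex d (c # s)" using c s by (auto simp: tree_vertex_def)
  have "c # s \<in> cone d \<omega> []" using tv s c by (simp add: cone_def)
  then have "c # s \<in> cone_gen d \<omega> (Suc 0)" by simp
  from G_reach[of d n "c # s", OF _ _ tv this] s obtain y where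
    "y \<in> cone_gen d \<omega> (Suc 0 + n)" "length (c # s) + n \<le> length y" by auto
  then show ?thesis using c s by (intro exI[of _ y]) auto
qed

lemma Groot_survival: "(\<And>n. Groot d n \<omega>) \<Longrightarrow> \<omega> \<in> survival d p"
  unfolding survival_eq
proof (intro CollectI allI)
  fix N assume G: "\<And>n. Groot d n \<omega>"
  from Groot_reach[OF G[of "Suc N"]] obtain y where y: "y \<in> cone_gen d \<omega> (Suc N)" "Suc N \<le> length y" by blast
  have "N \<le> length y" using y(2) by simp
  with y(1) show "\<exists>v. N \<le> length v \<and> (\<exists>n. v \<in> cone_gen d \<omega> n)" by blast
qed

lemma H_zero_true: "0 < d \<Longrightarrow> H d 0 m \<omega>"
  by (induction m arbitrary: \<omega>) auto

lemma H_mono: "0 < d \<Longrightarrow> H d (Suc n) m \<omega> \<Longrightarrow> H d n m \<omega>"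
proof (induction n arbitrary: m \<omega>)
  case 0 then show ?case by (simp add: H_zero_true)
next
  case (Suc n)
  show ?case using Suc.prems(2)
  proof (induction m arbitrary: \<omega>)
    case 0 then show ?case using Suc.IH[OF Suc.prems(1)] by auto
  next
    case (Suc m) then show ?case by auto
  qed
qed

lemma Groot_mono: "0 < d \<Longrightarrow> Groot d (Suc n) \<omega> \<Longrightarrow> Groot d n \<omega>"
  by (cases n) (auto dest: H_mono)

declare shift_apply[simp del]

function (sequential) V :: "nat \<Rightarrow> nat \<Rightarrow> nat \<Rightarrow> (nat list \<Rightarrow> nat) \<Rightarrow> bool" where
  "V d 0 h \<omega> = False"
| "V d (Suc j) 0 \<omega> = True"
| "V d (Suc j) (Suc h) \<omega> = (Suc h \<le> \<omega> [] \<or> (\<exists>c<d. V d (\<omega> []) h (sh [c] \<omega>)) \<or> (\<exists>c<d. V d j h (sh [c] \<omega>)))"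
  by pat_completeness auto
termination by (relation "Wellfounded.measure (\<lambda>(d,j,h,\<omega>). h)") auto

fun Dsub :: "nat \<Rightarrow> nat \<Rightarrow> (nat list \<Rightarrow> nat) \<Rightarrow> bool" where
  "Dsub d 0 \<omega> = True"
| "Dsub d (Suc h) \<omega> = (Suc h \<le> \<omega> [] \<or> (\<exists>c<d. V d (\<omega> []) h (sh [c] \<omega>)))"

fun Droot :: "nat \<Rightarrow> nat \<Rightarrow> (nat list \<Rightarrow> nat) \<Rightarrow> bool" where
  "Droot d 0 \<omega> = True"
| "Droot d (Suc h) \<omega> = (Suc h \<le> \<omega> [] \<or> (\<exists>c\<le>d. V d (\<omega> []) h (sh [c] \<omega>)))"

lemma V_mono: "V d j h \<omega> \<Longrightarrow> j \<le> j' \<Longrightarrow> V d j' h \<omega>"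
proof (induction h arbitrary: j j' \<omega>)
  case 0 then show ?case by (cases j; cases j') auto
next
  case (Suc h)
  then obtain j0 where j: "j = Suc j0" by (cases j) auto
  with Suc obtain j0' where j': "j' = Suc j0'" by (cases j') auto
  show ?case using Suc.prems Suc.IH[of j0 _ j0'] j j' by auto
qed

lemma V_max: "V d (max a j) h w = (V d a h w \<or> V d j h w)"
  by (cases "a \<le> j") (auto simp: max_def intro: V_mono)

lemma V_alt: "V d (Suc j) (Suc h) \<omega> = (Suc h \<le> \<omega> [] \<or> (\<exists>c<d. V d (max (\<omega> []) j) h (sh [c] \<omega>)))"
  by (auto simp: V_max)

lemma V_intro: "set s \<subseteq> {..<d} \<Longrightarrow> length s < j \<Longrightarrow> Dsub d (h - length s) (sh (z @ s) \<omega>) \<Longrightarrow> V d j h (sh z \<omega>)"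
proof (induction s arbitrary: z j h)
  case Nil
  then obtain j' where j: "j = Suc j'" by (cases j) auto
  show ?case using Nil j by (cases h) auto
next
  case (Cons c s)
  then obtain j' where j: "j = Suc j'" by (cases j) auto
  show ?case
  proof (cases h)
    case 0 then show ?thesis using j by simp
  next
    case (Suc h')
    have "V d j' h' (sh (z @ [c]) \<omega>)"
      using Cons.IH[where z="z @ [c]" and j=j' and h=h'] Cons.prems j Suc by auto
    then show ?thesis using j Suc Cons.prems by auto
  qed
qed

inductive reach :: "nat \<Rightarrow> (nat list \<Rightarrow> nat) \<Rightarrow> nat list \<Rightarrow> nat list \<Rightarrow> bool" for d \<omega> where
  reach_refl: "reach d \<omega> x x"
| reach_step: "t \<noteq> [] \<Longrightarrow> length t \<le> \<omega> x \<Longrightarrow> set t \<subseteq> {..<d} \<Longrightarrow> reach d \<omega> (x @ t) y \<Longrightarrow> reach d \<omega> x y"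

lemma reach_prefix: "reach d \<omega> x y \<Longrightarrow> \<exists>r. y = x @ r"
  by (induction rule: reach.induct) auto

lemma UB_sem: "reach d \<omega> x y \<Longrightarrow> h \<le> length y - length x \<Longrightarrow> Dsub d h (sh x \<omega>)"
proof (induction arbitrary: h rule: reach.induct)
  case (reach_refl x) then show ?case by simp
next
  case (reach_step t x y)
  show ?case
  proof (cases h)
    case 0 then show ?thesis by simp
  next
    case (Suc h')
    show ?thesis
    proof (cases "Suc h' \<le> \<omega> x")
      case True then show ?thesis using Suc by simp
    next
      case False
      obtain c t' where t: "t = c # t'" using reach_step.hyps(1) by (cases t) auto
      have c: "c < d" "set t' \<subseteq> {..<d}" using reach_step.hyps(3) t by auto
      obtain r where r: "y = (x @ t) @ r" using reach_prefix[OF reach_step.hyps(4)] by blast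
      have len: "h' - length t' \<le> length y - length (x @ t)"
        using reach_step.prems Suc r t by auto
      have "Dsub d (h' - length t') (sh ((x @ [c]) @ t') \<omega>)"
        using reach_step.IH[OF len] t by simp
      then have "V d (\<omega> x) h' (sh (x @ [c]) \<omega>)"
        using V_intro[of t' d "\<omega> x" h' "x @ [c]" \<omega>] c reach_step.hyps(2) t by auto
      then show ?thesis using Suc c by auto
    qed
  qed
qed

lemma reach_snoc: "reach d \<omega> x u \<Longrightarrow> t \<noteq> [] \<Longrightarrow> length t \<le> \<omega> u \<Longrightarrow> set t \<subseteq> {..<d} \<Longrightarrow> reach d \<omega> x (u @ t)"
proof (induction rule: reach.induct)
  case (reach_refl x)
  then show ?case by (auto intro: reach.intros)
next
  case (reach_step t' x y)
  then show ?case by (auto intro: reach.intros)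
qed

lemma cg_reach: "v \<in> cone_gen d \<omega> n \<Longrightarrow>
   v = [] \<or> (\<exists>c t'. c \<le> d \<and> set t' \<subseteq> {..<d} \<and> Suc (length t') \<le> \<omega> [] \<and> reach d \<omega> (c # t') v)"
proof (induction n arbitrary: v)
  case 0 then show ?case by simp
next
  case (Suc n)
  then obtain u where u: "u \<in> cone_gen d \<omega> n" "v \<in> cone d \<omega> u" by auto
  from u(2) have tv: "tree_vertex d v" and pre: "prefix u v" and len: "length v - length u \<le> \<omega> u"
    by (auto simp: cone_def)
  from pre obtain t where vt: "v = u @ t" by (auto simp: prefix_def)
  from Suc.IH[OF u(1)] show ?case
  proof
    assume u0: "u = []"
    show ?thesis
    proof (cases v)
      case Nil then show ?thesis by simp
    next
      case (Cons a list)
      have r: "reach d \<omega> (a # list) v" using Cons by (simp add: reach_refl)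
      have "a \<le> d" "set list \<subseteq> {..<d}" using tv Cons by (auto simp: tree_vertex_def)
      moreover have "Suc (length list) \<le> \<omega> []" using len u0 Cons by simp
      ultimately show ?thesis using r by blast
    qed
  next
    assume "\<exists>c t'. c \<le> d \<and> set t' \<subseteq> {..<d} \<and> Suc (length t') \<le> \<omega> [] \<and> reach d \<omega> (c # t') u"
    then obtain c t' where ct: "c \<le> d" "set t' \<subseteq> {..<d}" "Suc (length t') \<le> \<omega> []" "reach d \<omega> (c # t') u"
      by blast
    show ?thesis
    proof (cases "t = []")
      case True then show ?thesis using vt ct by auto
    next
      case False
      obtain r where ur: "u = (c # t') @ r" using reach_prefix[OF ct(4)] by blast
      have "set t \<subseteq> {..<d}" using tv vt ur by (auto simp: tree_vertex_def)
      moreover have "length t \<le> \<omega> u" using len vt by simp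
      ultimately have "reach d \<omega> (c # t') v" using reach_snoc[OF ct(4) False] vt by simp
      then show ?thesis using ct by blast
    qed
  qed
qed

lemma surv_Droot: "\<omega> \<in> survival d p \<Longrightarrow> Droot d (Suc h) \<omega>"
proof -
  assume "\<omega> \<in> survival d p"
  then obtain v n where v: "Suc h \<le> length v" "v \<in> cone_gen d \<omega> n" unfolding survival_eq by blast
  then have "v \<noteq> []" by auto
  with cg_reach[OF v(2)] obtain c t' where ct: "c \<le> d" "set t' \<subseteq> {..<d}" "Suc (length t') \<le> \<omega> []"
    "reach d \<omega> (c # t') v" by blast
  show ?thesis
  proof (cases "Suc h \<le> \<omega> []")
    case True then show ?thesis by simp
  next
    case False
    have "Dsub d (h - length t') (sh ([c] @ t') \<omega>)"
      using UB_sem[OF ct(4)] v(1) by simp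
    then have "V d (\<omega> []) h (sh [c] \<omega>)"
      using V_intro[of t' d "\<omega> []" h "[c]" \<omega>] ct by auto
    then show ?thesis using ct by auto
  qed
qed

lemma V_meas: "Measurable.pred (cone_space p) (V d j h)"
proof (induction h arbitrary: j)
  case 0
  show ?case
  proof (cases j)
    case 0
    have "V d j 0 = (\<lambda>_. False)" using 0 by (simp add: fun_eq_iff)
    then show ?thesis by simp
  next
    case (Suc j')
    have "V d j 0 = (\<lambda>_. True)" using Suc by (simp add: fun_eq_iff)
    then show ?thesis by simp
  qed
next
  case (Suc h)
  show ?case
  proof (cases j)
    case 0
    have "V d j (Suc h) = (\<lambda>_. False)" using 0 by (simp add: fun_eq_iff)
    then show ?thesis by simp
  next
    case (Suc j')
    define Q where "Q = (\<lambda>k \<omega>. \<exists>c<d. V d k h (sh [c] \<omega>))"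
    have [measurable]: "Measurable.pred (cone_space p) (Q k)" for k
      unfolding Q_def by (rule pred_ex_child) (rule Suc.IH)
    have [measurable]: "Measurable.pred (cone_space p) (\<lambda>\<omega>. Suc h \<le> \<omega> [])"
      by (rule coord_pred)
    have "V d j (Suc h) = (\<lambda>\<omega>. Suc h \<le> \<omega> [] \<or> (\<exists>k. \<omega> [] = k \<and> Q k \<omega>) \<or> Q j' \<omega>)"
      using Suc by (simp add: fun_eq_iff Q_def)
    moreover have "Measurable.pred (cone_space p) (\<lambda>\<omega>. Suc h \<le> \<omega> [] \<or> (\<exists>k. \<omega> [] = k \<and> Q k \<omega>) \<or> Q j' \<omega>)"
      by measurable
    ultimately show ?thesis by simp
  qed
qed

lemma Droot_meas: "Measurable.pred (cone_space p) (Droot d (Suc h))"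
proof -
  define Q where "Q = (\<lambda>k \<omega>. \<exists>c\<le>d. V d k h (sh [c] \<omega>))"
  have [measurable]: "Measurable.pred (cone_space p) (Q k)" for k
    unfolding Q_def by (rule pred_ex_child_le) (rule V_meas)
  have [measurable]: "Measurable.pred (cone_space p) (\<lambda>\<omega>. Suc h \<le> \<omega> [])"
    by (rule coord_pred)
  have "Droot d (Suc h) = (\<lambda>\<omega>. Suc h \<le> \<omega> [] \<or> (\<exists>k. \<omega> [] = k \<and> Q k \<omega>))"
    by (simp add: fun_eq_iff Q_def)
  moreover have "Measurable.pred (cone_space p) (\<lambda>\<omega>. Suc h \<le> \<omega> [] \<or> (\<exists>k. \<omega> [] = k \<and> Q k \<omega>))"
    by measurable
  ultimately show ?thesis by simp
qed

definition vv :: "nat \<Rightarrow> nat pmf \<Rightarrow> nat \<Rightarrow> nat \<Rightarrow> real" where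
  "vv d p j h = measure (cone_space p) {\<omega>. V d j h \<omega>}"

lemma vv_bounds: "0 \<le> vv d p j h" "vv d p j h \<le> 1"
proof -
  interpret prob_space "cone_space p" by (rule prob_space_cone)
  show "0 \<le> vv d p j h" "vv d p j h \<le> 1" by (auto simp: vv_def)
qed

lemma sums_finite_le: "(\<lambda>k. if k \<le> h then g k else 0) sums (\<Sum>k\<le>h. g k)"
proof -
  have "(\<lambda>k. if k \<le> h then g k else 0) sums (\<Sum>k\<le>h. if k \<le> h then g k else 0)"
    by (rule sums_finite) auto
  then show ?thesis by simp
qed

lemma R1: "1 - vv d p (Suc j) (Suc h) = (\<Sum>k\<le>h. pmf p k * (1 - vv d p (max k j) h) ^ d)"
proof -
  have "(\<lambda>k. if k \<le> h then pmf p k * (\<Prod>c\<in>{..<d}. measure (cone_space p) {\<omega>. \<not> V d (max k j) h \<omega>}) else 0)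
     sums measure (cone_space p) {\<omega>. \<not> V d (Suc j) (Suc h) \<omega>}"
  proof (rule decomp_root[OF pred_sets_not[OF V_meas]])
    fix k
    show "{\<omega>. \<not> V d (Suc j) (Suc h) \<omega>} \<inter> {\<omega>. \<omega> [] = k} =
      (if k \<le> h then {\<omega>. \<omega> [] = k \<and> (\<forall>c\<in>{..<d}. sh [c] \<omega> \<in> {\<omega>. \<not> V d (max k j) h \<omega>})} else {})"
      by (cases "k \<le> h") (auto simp: V_alt simp del: V.simps)
  qed (simp_all only: pred_sets_not[OF V_meas] finite_lessThan)
  moreover have m1: "measure (cone_space p) {\<omega>. \<not> V d k h \<omega>} = 1 - vv d p k h" for k
    unfolding vv_def by (rule measure_not[OF V_meas])
  moreover have m2: "measure (cone_space p) {\<omega>. \<not> V d (Suc j) (Suc h) \<omega>} = 1 - vv d p (Suc j) (Suc h)"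
    unfolding vv_def by (rule measure_not[OF V_meas])
  ultimately have "(\<lambda>k. if k \<le> h then pmf p k * (1 - vv d p (max k j) h) ^ d else 0) sums (1 - vv d p (Suc j) (Suc h))"
    by (simp only: m1 m2 prod_constant card_lessThan)
  from this sums_finite_le show ?thesis by (rule sums_unique2)
qed

lemma R2: "1 - measure (cone_space p) {\<omega>. Droot d (Suc h) \<omega>} = (\<Sum>k\<le>h. pmf p k * (1 - vv d p k h) ^ Suc d)"
proof -
  have "(\<lambda>k. if k \<le> h then pmf p k * (\<Prod>c\<in>{..d}. measure (cone_space p) {\<omega>. \<not> V d k h \<omega>}) else 0)
     sums measure (cone_space p) {\<omega>. \<not> Droot d (Suc h) \<omega>}"
  proof (rule decomp_root[OF pred_sets_not[OF Droot_meas]])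
    fix k
    show "{\<omega>. \<not> Droot d (Suc h) \<omega>} \<inter> {\<omega>. \<omega> [] = k} =
      (if k \<le> h then {\<omega>. \<omega> [] = k \<and> (\<forall>c\<in>{..d}. sh [c] \<omega> \<in> {\<omega>. \<not> V d k h \<omega>})} else {})"
      by auto
  qed (simp_all only: pred_sets_not[OF V_meas] finite_atMost)
  moreover have m1: "measure (cone_space p) {\<omega>. \<not> V d k h \<omega>} = 1 - vv d p k h" for k
    unfolding vv_def by (rule measure_not[OF V_meas])
  moreover have m2: "measure (cone_space p) {\<omega>. \<not> Droot d (Suc h) \<omega>} = 1 - measure (cone_space p) {\<omega>. Droot d (Suc h) \<omega>}"
    by (rule measure_not[OF Droot_meas])
  ultimately have "(\<lambda>k. if k \<le> h then pmf p k * (1 - vv d p k h) ^ Suc d else 0) sums (1 - measure (cone_space p) {\<omega>. Droot d (Suc h) \<omega>})"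
    by (simp only: m1 m2 prod_constant card_atMost)
  from this sums_finite_le show ?thesis by (rule sums_unique2)
qed

lemma vv_0: "vv d p 0 h = 0" by (simp add: vv_def)
lemma vv_Suc0: "vv d p (Suc j) 0 = 1"
proof -
  interpret prob_space "cone_space p" by (rule prob_space_cone)
  have "prob (space (cone_space p)) = 1" by (rule prob_space)
  then show ?thesis by (simp add: vv_def)
qed

lemma surv_le_Droot: "measure (cone_space p) (survival d p) \<le> measure (cone_space p) {\<omega>. Droot d (Suc h) \<omega>}"
proof -
  interpret prob_space "cone_space p" by (rule prob_space_cone)
  have "survival d p \<subseteq> {\<omega>. Droot d (Suc h) \<omega>}" using surv_Droot by blast
  then show ?thesis by (rule finite_measure_mono[OF _ pred_sets[OF Droot_meas]])
qed

fun phi :: "nat \<Rightarrow> nat pmf \<Rightarrow> nat \<Rightarrow> real" where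
  "phi d p 0 = 0"
| "phi d p (Suc h) = (\<Sum>k\<le>h. pmf p k * (\<Prod>i<k. phi d p (h - i) ^ (d ^ i)) ^ d)"

definition Bp :: "nat \<Rightarrow> nat pmf \<Rightarrow> nat \<Rightarrow> nat \<Rightarrow> real" where
  "Bp d p k h = (\<Prod>i<k. phi d p (h - i) ^ (d ^ i))"

lemma phi_Suc': "phi d p (Suc h) = (\<Sum>k\<le>h. pmf p k * Bp d p k h ^ d)"
  by (simp add: Bp_def)

lemma sum_pmf_le1: "(\<Sum>k\<in>A. pmf p k) \<le> 1" if "finite A"
  using that measure_measure_pmf_finite[OF that, of p] measure_pmf.prob_le_1[of p A] by simp

lemma phi_bounds: "0 \<le> phi d p h \<and> phi d p h \<le> 1"
proof (induction h rule: less_induct)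
  case (less h)
  show ?case
  proof (cases h)
    case 0 then show ?thesis by simp
  next
    case (Suc h')
    have B: "0 \<le> Bp d p k h' \<and> Bp d p k h' \<le> 1" for k
      unfolding Bp_def using less Suc
      by (auto intro!: prod_nonneg prod_le_1 zero_le_power power_le_one)
    have "0 \<le> (\<Sum>k\<le>h'. pmf p k * Bp d p k h' ^ d)"
      using B by (intro sum_nonneg mult_nonneg_nonneg) auto
    moreover have "(\<Sum>k\<le>h'. pmf p k * Bp d p k h' ^ d) \<le> (\<Sum>k\<le>h'. pmf p k)"
      using B by (intro sum_mono mult_right_le_one_le) (auto intro: power_le_one)
    moreover have "(\<Sum>k\<le>h'. pmf p k) \<le> 1" by (rule sum_pmf_le1) simp
    ultimately show ?thesis unfolding Suc phi_Suc' by linarith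
  qed
qed

lemma Bp_bounds: "0 \<le> Bp d p k h" "Bp d p k h \<le> 1"
  unfolding Bp_def using phi_bounds
  by (auto intro!: prod_nonneg prod_le_1 zero_le_power power_le_one)

lemma phi_mono: "phi d p h \<le> phi d p (Suc h)"
proof (induction h rule: less_induct)
  case (less h)
  show ?case
  proof (cases h)
    case 0 then show ?thesis using phi_bounds[of d p "Suc 0"] by simp
  next
    case (Suc h')
    have fac: "phi d p (h' - i) \<le> phi d p (Suc h' - i)" for i
    proof (cases "i \<le> h'")
      case True
      then have "Suc h' - i = Suc (h' - i)" by simp
      then show ?thesis using less[of "h' - i"] Suc by simp
    next
      case False then show ?thesis by simp
    qed
    have Bm: "Bp d p k h' \<le> Bp d p k (Suc h')" for k
      unfolding Bp_def
      by (intro prod_mono conjI zero_le_power power_mono fac) (use phi_bounds in blast)+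
    have "(\<Sum>k\<le>h'. pmf p k * Bp d p k h' ^ d) \<le> (\<Sum>k\<le>h'. pmf p k * Bp d p k (Suc h') ^ d)"
      by (intro sum_mono mult_left_mono power_mono Bm Bp_bounds) simp
    also have "\<dots> \<le> (\<Sum>k\<le>Suc h'. pmf p k * Bp d p k (Suc h') ^ d)"
      using Bp_bounds by (simp add: zero_le_power)
    finally show ?thesis using Suc by (simp only: phi_Suc')
  qed
qed

lemma Bp_Suc_Suc: "Bp d p (Suc j) (Suc h) = phi d p (Suc h) * Bp d p j h ^ d"
proof -
  have "Bp d p (Suc j) (Suc h) = phi d p (Suc h) * (\<Prod>i<j. phi d p (Suc h - Suc i) ^ (d ^ Suc i))"
    unfolding Bp_def by (subst prod.lessThan_Suc_shift) simp
  also have "(\<Prod>i<j. phi d p (Suc h - Suc i) ^ (d ^ Suc i)) = (\<Prod>i<j. (phi d p (h - i) ^ (d ^ i)) ^ d)"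
    by (intro prod.cong refl) (simp add: power_mult[symmetric] mult.commute)
  also have "\<dots> = Bp d p j h ^ d" by (simp add: Bp_def prod_power_distrib)
  finally show ?thesis .
qed

lemma Bp_max: "Bp d p k h * Bp d p j h \<le> Bp d p (max k j) h"
proof (cases "k \<le> j")
  case True
  then show ?thesis using Bp_bounds[of d p k h] Bp_bounds[of d p j h]
    by (simp add: max_def mult_left_le_one_le)
next
  case False
  then show ?thesis using Bp_bounds[of d p k h] Bp_bounds[of d p j h]
    by (simp add: max_def mult_right_le_one_le)
qed

lemma C3: "Bp d p j h \<le> 1 - vv d p j h"
proof (induction h arbitrary: j)
  case 0
  show ?case
  proof (cases j)
    case 0 then show ?thesis by (simp add: Bp_def vv_0)
  next
    case (Suc j')
    have "Bp d p j 0 = 0" unfolding Bp_def Suc by (subst prod.lessThan_Suc_shift) simp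
    then show ?thesis using vv_bounds[of d p j 0] by simp
  qed
next
  case (Suc h)
  show ?case
  proof (cases j)
    case 0 then show ?thesis by (simp add: Bp_def vv_0)
  next
    case (Suc j')
    have "Bp d p j (Suc h) = (\<Sum>k\<le>h. pmf p k * (Bp d p k h * Bp d p j' h) ^ d)"
      unfolding Suc Bp_Suc_Suc phi_Suc'
      by (simp add: sum_distrib_right power_mult_distrib mult.assoc)
    also have "\<dots> \<le> (\<Sum>k\<le>h. pmf p k * (1 - vv d p (max k j') h) ^ d)"
    proof (intro sum_mono mult_left_mono power_mono)
      fix k
      show "Bp d p k h * Bp d p j' h \<le> 1 - vv d p (max k j') h"
        using Bp_max[of d p k h j'] Suc.IH[of "max k j'"] by linarith
      show "0 \<le> Bp d p k h * Bp d p j' h" using Bp_bounds by (simp add: mult_nonneg_nonneg)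
    qed simp
    also have "\<dots> = 1 - vv d p j (Suc h)" unfolding Suc by (rule R1[symmetric])
    finally show ?thesis .
  qed
qed

definition T :: "nat \<Rightarrow> nat pmf \<Rightarrow> nat \<Rightarrow> real" where
  "T d p h = (\<Sum>k\<le>h. pmf p k * Bp d p k h ^ Suc d)"

lemma surv_le_T: "measure (cone_space p) (survival d p) \<le> 1 - T d p h"
proof -
  have "T d p h \<le> (\<Sum>k\<le>h. pmf p k * (1 - vv d p k h) ^ Suc d)"
    unfolding T_def by (intro sum_mono mult_left_mono power_mono C3 Bp_bounds) simp_all
  then show ?thesis using R2[of p d h] surv_le_Droot[of p d h] by linarith
qed

lemma pmf_dom_conv:
  fixes f :: "nat \<Rightarrow> nat \<Rightarrow> real"
  assumes b: "\<And>h k. \<bar>f h k\<bar> \<le> 1" and l: "\<And>k. (\<lambda>h. f h k) \<longlonglongrightarrow> g k"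
  shows "(\<lambda>h. measure_pmf.expectation p (f h)) \<longlonglongrightarrow> measure_pmf.expectation p g"
  by (rule integral_dominated_convergence[where w="\<lambda>_. 1"]) (auto simp: b l)

lemma finite_expect:
  fixes g :: "nat \<Rightarrow> real"
  assumes that: "\<And>k. \<bar>g k\<bar> \<le> 1"
  shows "(\<Sum>k\<le>h. pmf p k * g k) = measure_pmf.expectation p (\<lambda>k. if k \<le> h then g k else 0)"
proof -
  have "(\<lambda>k. pmf p k * (if k \<le> h then g k else 0)) sums measure_pmf.expectation p (\<lambda>k. if k \<le> h then g k else 0)"
    by (rule pmf_expectation_sums[where Bd=1]) (simp add: that)
  moreover have "(\<lambda>k. pmf p k * (if k \<le> h then g k else 0)) = (\<lambda>k. if k \<le> h then pmf p k * g k else 0)"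
    by auto
  ultimately show ?thesis using sums_finite_le sums_unique2 by metis
qed

definition Lk :: "nat \<Rightarrow> nat \<Rightarrow> nat" where "Lk d k = (\<Sum>i<k. d ^ i)"

lemma phi_lim: "\<exists>L. phi d p \<longlonglongrightarrow> L \<and> 0 \<le> L \<and> L \<le> 1"
proof -
  have inc: "incseq (phi d p)" by (rule incseq_SucI) (rule phi_mono)
  have bdd: "bdd_above (range (phi d p))" using phi_bounds by (auto intro!: bdd_aboveI[of _ 1])
  have lim: "phi d p \<longlonglongrightarrow> (SUP i. phi d p i)" by (rule LIMSEQ_incseq_SUP[OF bdd inc])
  have "0 \<le> (SUP i. phi d p i)" by (rule LIMSEQ_le_const[OF lim]) (use phi_bounds in blast)
  moreover have "(SUP i. phi d p i) \<le> 1" by (rule LIMSEQ_le_const2[OF lim]) (use phi_bounds in blast)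
  ultimately show ?thesis using lim by blast
qed

lemma Bp_lim: assumes "phi d p \<longlonglongrightarrow> L" shows "(\<lambda>h. Bp d p k h) \<longlonglongrightarrow> L ^ Lk d k"
proof -
  have sh: "(\<lambda>h. phi d p (h - i)) \<longlonglongrightarrow> L" for i
    by (rule LIMSEQ_offset[where k=i]) (simp add: assms)
  have "(\<lambda>h. \<Prod>i<k. phi d p (h - i) ^ (d ^ i)) \<longlonglongrightarrow> (\<Prod>i<k. L ^ (d ^ i))"
    by (intro tendsto_prod tendsto_power sh)
  then show ?thesis by (simp add: Bp_def Lk_def power_sum)
qed

lemma trunc_lim: assumes "phi d p \<longlonglongrightarrow> L"
  shows "(\<lambda>h. if k \<le> h then Bp d p k h ^ n else 0) \<longlonglongrightarrow> L ^ (Lk d k * n)"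
proof (rule LIMSEQ_offset[where k=k])
  have "(\<lambda>h. Bp d p k (h + k) ^ n) \<longlonglongrightarrow> (L ^ Lk d k) ^ n"
    by (intro tendsto_power LIMSEQ_ignore_initial_segment Bp_lim assms)
  then show "(\<lambda>h. if k \<le> h + k then Bp d p k (h + k) ^ n else 0) \<longlonglongrightarrow> L ^ (Lk d k * n)"
    by (simp add: power_mult)
qed

lemma trunc_bound: "\<bar>Bp d p k h ^ n\<bar> \<le> 1"
  using Bp_bounds[of d p k h] by (simp add: power_le_one)

lemma exp_trunc_lim: assumes "phi d p \<longlonglongrightarrow> L"
  shows "(\<lambda>h. \<Sum>k\<le>h. pmf p k * Bp d p k h ^ n) \<longlonglongrightarrow> measure_pmf.expectation p (\<lambda>k. L ^ (Lk d k * n))"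
proof -
  have "(\<lambda>h. measure_pmf.expectation p (\<lambda>k. if k \<le> h then Bp d p k h ^ n else 0))
        \<longlonglongrightarrow> measure_pmf.expectation p (\<lambda>k. L ^ (Lk d k * n))"
    by (rule pmf_dom_conv) (auto simp: trunc_bound trunc_lim[OF assms])
  moreover have "(\<Sum>k\<le>h. pmf p k * Bp d p k h ^ n) = measure_pmf.expectation p (\<lambda>k. if k \<le> h then Bp d p k h ^ n else 0)" for h
    by (rule finite_expect) (rule trunc_bound)
  ultimately show ?thesis by simp
qed

lemma sum_1_k: "(\<Sum>m=1..k. d ^ m) = d * Lk d k"
  by (induction k) (simp_all add: Lk_def sum.cl_ivl_Suc algebra_simps)

lemma Lk_pos: "0 < k \<Longrightarrow> 0 < Lk d k"
  by (cases k) (auto simp: Lk_def)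

lemma real_Lk: "d \<ge> 2 \<Longrightarrow> real (Lk d k) = (real d ^ k - 1) / (real d - 1)"
proof -
  assume "d \<ge> 2"
  then have "real d \<noteq> 1" by simp
  then show ?thesis unfolding Lk_def by (simp add: geometric_sum)
qed

lemma UB_main:
  fixes \<psi> :: real
  assumes d: "d \<ge> 2" and p0: "0 < pmf p 0"
    and psi_nonneg: "\<psi> \<ge> 0"
    and psi_root: "measure_pmf.expectation p (\<lambda>k. \<psi> ^ (\<Sum>m=1..k. d ^ m)) = \<psi>"
    and psi_least: "\<And>x. x \<ge> 0 \<Longrightarrow>
        measure_pmf.expectation p (\<lambda>k. x ^ (\<Sum>m=1..k. d ^ m)) = x \<Longrightarrow> \<psi> \<le> x"
  shows "measure (cone_space p) (survival d p)
         \<le> 1 - measure_pmf.expectation p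
               (\<lambda>k. \<psi> powr ((real d + 1) / (real d - 1) * (real d ^ k - 1)))"
proof -
  obtain L where L: "phi d p \<longlonglongrightarrow> L" "0 \<le> L" "L \<le> 1" using phi_lim by blast
  have "(\<lambda>h. phi d p (Suc h)) \<longlonglongrightarrow> measure_pmf.expectation p (\<lambda>k. L ^ (Lk d k * d))"
    unfolding phi_Suc' by (rule exp_trunc_lim[OF L(1)])
  moreover have "(\<lambda>h. phi d p (Suc h)) \<longlonglongrightarrow> L" using L(1) by (rule LIMSEQ_Suc)
  ultimately have fix1: "measure_pmf.expectation p (\<lambda>k. L ^ (Lk d k * d)) = L"
    using LIMSEQ_unique by blast
  have "(\<lambda>k. L ^ (\<Sum>m=1..k. d ^ m)) = (\<lambda>k. L ^ (Lk d k * d))"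
    by (rule ext, subst sum_1_k, simp add: mult.commute)
  then have "measure_pmf.expectation p (\<lambda>k. L ^ (\<Sum>m=1..k. d ^ m)) = L" using fix1 by simp
  then have psiL: "\<psi> \<le> L" using psi_least L(2) by blast
  have Tlim: "(\<lambda>h. T d p h) \<longlonglongrightarrow> measure_pmf.expectation p (\<lambda>k. L ^ (Lk d k * Suc d))"
    unfolding T_def by (rule exp_trunc_lim[OF L(1)])
  have "measure (cone_space p) (survival d p) \<le> 1 - measure_pmf.expectation p (\<lambda>k. L ^ (Lk d k * Suc d))"
    by (rule LIMSEQ_le_const[OF tendsto_diff[OF tendsto_const Tlim]]) (use surv_le_T in blast)
  moreover have "measure_pmf.expectation p (\<lambda>k. \<psi> ^ (Lk d k * Suc d)) \<le> measure_pmf.expectation p (\<lambda>k. L ^ (Lk d k * Suc d))"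
  proof (rule sums_le[OF _ pmf_expectation_sums pmf_expectation_sums])
    show "pmf p k * \<psi> ^ (Lk d k * Suc d) \<le> pmf p k * L ^ (Lk d k * Suc d)" for k
      by (intro mult_left_mono power_mono psiL psi_nonneg) simp
    show "\<bar>\<psi> ^ (Lk d k * Suc d)\<bar> \<le> 1" for k
      using psiL L(3) psi_nonneg by (simp add: power_le_one)
    show "\<bar>L ^ (Lk d k * Suc d)\<bar> \<le> 1" for k
      using L by (simp add: power_le_one)
  qed
  moreover have "\<psi> > 0"
  proof (rule ccontr)
    assume "\<not> \<psi> > 0"
    then have z: "\<psi> = 0" using psi_nonneg by simp
    have pos: "0 < (\<Sum>m=1..k. d ^ m)" if "0 < k" for k
      by (subst sum_1_k) (use d Lk_pos[OF that, of d] in simp)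
    have f: "(\<lambda>k. \<psi> ^ (\<Sum>m=1..k. d ^ m)) = (\<lambda>k. if k = 0 then 1 else 0)"
    proof
      fix k show "\<psi> ^ (\<Sum>m=1..k. d ^ m) = (if k = 0 then 1 else 0)"
        using pos[of k] by (cases "k = 0") (simp_all add: z)
    qed
    have "(\<lambda>k. pmf p k * (if k = 0 then 1 else 0)) sums measure_pmf.expectation p (\<lambda>k. if k = 0 then 1 else (0::real))"
      by (rule pmf_expectation_sums[where Bd=1]) simp
    moreover have "(\<lambda>k. pmf p k * (if k = 0 then 1 else 0)) = (\<lambda>k. if k = 0 then pmf p k else 0)"
      by auto
    ultimately have "measure_pmf.expectation p (\<lambda>k. if k = 0 then 1 else (0::real)) = pmf p 0"
      using sums_single[of 0 "pmf p"] sums_unique2 by metis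
    then show False using psi_root f z p0 by simp
  qed
  moreover have "(\<lambda>k. \<psi> powr ((real d + 1) / (real d - 1) * (real d ^ k - 1))) = (\<lambda>k. \<psi> ^ (Lk d k * Suc d))"
  proof
    fix k
    have "(real d + 1) / (real d - 1) * (real d ^ k - 1) = (real d + 1) * ((real d ^ k - 1) / (real d - 1))"
      by simp
    also have "\<dots> = (real d + 1) * real (Lk d k)" by (simp add: real_Lk[OF d, of k])
    also have "\<dots> = real (Lk d k * Suc d)" by (simp add: algebra_simps)
    finally have "(real d + 1) / (real d - 1) * (real d ^ k - 1) = real (Lk d k * Suc d)" .
    then show "\<psi> powr ((real d + 1) / (real d - 1) * (real d ^ k - 1)) = \<psi> ^ (Lk d k * Suc d)"
      using \<open>\<psi> > 0\<close> powr_realpow[OF \<open>\<psi> > 0\<close>, of "Lk d k * Suc d"] by (simp only:)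
  qed
  ultimately show ?thesis by simp
qed

lemma PGroot: "(\<lambda>k. pmf p k * (if k = 0 then 1 else aa d p n ^ (d ^ (k - 1) * Suc d))) sums
   measure (cone_space p) {\<omega>. \<not> Groot d (Suc n) \<omega>}"
proof -
  have S: "(\<lambda>k. if True then pmf p k * (\<Prod>c\<in>(if k = 0 then {} else {..d}). measure (cone_space p) {\<omega>. \<not> H d n (k - 1) \<omega>}) else 0)
     sums measure (cone_space p) {\<omega>. \<not> Groot d (Suc n) \<omega>}"
  proof (rule decomp_root[OF pred_sets_not[OF Groot_meas]])
    fix k
    show "{\<omega>. \<not> Groot d (Suc n) \<omega>} \<inter> {\<omega>. \<omega> [] = k} =
      (if True then {\<omega>. \<omega> [] = k \<and> (\<forall>c\<in>(if k = 0 then {} else {..d}). sh [c] \<omega> \<in> {\<omega>. \<not> H d n (k - 1) \<omega>})} else {})"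
      by (cases k) auto
  qed (simp_all only: pred_sets_not[OF H_meas] finite.emptyI finite_atMost if_True if_False split: if_split, simp_all)
  have eq: "(if True then pmf p k * (\<Prod>c\<in>(if k = 0 then {} else {..d}). measure (cone_space p) {\<omega>. \<not> H d n (k - 1) \<omega>}) else 0)
      = pmf p k * (if k = 0 then 1 else aa d p n ^ (d ^ (k - 1) * Suc d))" for k
  proof (cases k)
    case 0 then show ?thesis by simp
  next
    case (Suc k')
    have "(\<Prod>c\<in>{..d}. measure (cone_space p) {\<omega>. \<not> H d n k' \<omega>}) = (aa d p n ^ (d ^ k')) ^ Suc d"
      by (simp add: PH)
    also have "\<dots> = aa d p n ^ (d ^ k' * Suc d)" by (simp only: power_mult)
    finally show ?thesis using Suc by simp
  qed
  show ?thesis using S unfolding eq .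
qed

lemma LB_main:
  fixes \<rho> :: real
  assumes d: "d \<ge> 2"
    and p0: "0 < pmf p 0" "pmf p 0 < 1"
    and rho_nonneg: "\<rho> \<ge> 0"
    and rho_root: "measure_pmf.expectation p (\<lambda>k. \<rho> ^ (d ^ k)) + (1 - \<rho>) * pmf p 0 = \<rho>"
    and rho_least: "\<And>x. x \<ge> 0 \<Longrightarrow>
        measure_pmf.expectation p (\<lambda>k. x ^ (d ^ k)) + (1 - x) * pmf p 0 = x \<Longrightarrow> \<rho> \<le> x"
  shows "1 - (1 - \<rho> powr ((real d + 1) / real d)) * pmf p 0
           - measure_pmf.expectation p (\<lambda>k. \<rho> powr ((real d + 1) / real d * real d ^ k))
         \<le> measure (cone_space p) (survival d p)"
proof -
  interpret prob_space "cone_space p" by (rule prob_space_cone)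
  have E1: "measure_pmf.expectation p (\<lambda>k. (1::real)) = 1"
  proof -
    have "(\<lambda>k. pmf p k * 1) sums measure_pmf.expectation p (\<lambda>k. (1::real))"
      by (rule pmf_expectation_sums[where Bd=1]) simp
    then show ?thesis using pmf_sums_one[of p] sums_unique2 by simp
  qed
  have rho1: "\<rho> \<le> 1" by (rule rho_least) (simp_all add: E1)
  have rho_pos: "\<rho> > 0"
  proof (rule ccontr)
    assume "\<not> \<rho> > 0"
    then have z: "\<rho> = 0" using rho_nonneg by simp
    have "(\<lambda>k. \<rho> ^ (d ^ k)) = (\<lambda>k. 0)" using d by (auto simp: z fun_eq_iff)
    then show False using rho_root z p0 by simp
  qed
  have Erho: "(\<lambda>k. pmf p k * \<rho> ^ (d ^ k)) sums measure_pmf.expectation p (\<lambda>k. \<rho> ^ (d ^ k))"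
    by (rule pmf_expectation_sums[where Bd=1]) (use rho_nonneg rho1 in \<open>simp add: power_le_one\<close>)
  have Srho: "(\<lambda>k. pmf p k * (if k = 0 then 1 else \<rho> ^ (d ^ k))) sums \<rho>"
  proof -
    have "(\<lambda>k. pmf p k * \<rho> ^ (d ^ k) + (if k = 0 then pmf p 0 * (1 - \<rho>) else 0)) sums
          (measure_pmf.expectation p (\<lambda>k. \<rho> ^ (d ^ k)) + pmf p 0 * (1 - \<rho>))"
      by (rule sums_add[OF Erho]) (rule sums_single)
    moreover have "(\<lambda>k. pmf p k * \<rho> ^ (d ^ k) + (if k = 0 then pmf p 0 * (1 - \<rho>) else 0))
        = (\<lambda>k. pmf p k * (if k = 0 then 1 else \<rho> ^ (d ^ k)))"
      by (auto simp: fun_eq_iff algebra_simps)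
    ultimately show ?thesis using rho_root by (simp add: mult.commute)
  qed
  have aa_nonneg: "0 \<le> aa d p n" for n by (simp add: aa_def)
  have aa_le: "aa d p n \<le> \<rho>" for n
  proof (induction n)
    case 0
    have "{\<omega>. \<not> H d 0 0 \<omega>} = {}" by simp
    then show ?case using rho_nonneg by (simp add: aa_def)
  next
    case (Suc n)
    show ?case
    proof (rule sums_le[OF _ PG Srho])
      fix k show "pmf p k * (if k = 0 then 1 else aa d p n ^ (d ^ k)) \<le> pmf p k * (if k = 0 then 1 else \<rho> ^ (d ^ k))"
        using Suc aa_nonneg[of n] by (auto intro!: mult_left_mono power_mono)
    qed
  qed
  define c where "c = (real d + 1) / real d"
  have powr_bound: "\<bar>\<rho> powr (c * real d ^ k)\<bar> \<le> 1" for k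
  proof -
    have "\<rho> powr (c * real d ^ k) \<le> 1 powr (c * real d ^ k)"
      by (rule powr_mono2) (use rho_nonneg rho1 d in \<open>auto simp: c_def\<close>)
    then show ?thesis by simp
  qed
  have E2: "(\<lambda>k. pmf p k * \<rho> powr (c * real d ^ k)) sums measure_pmf.expectation p (\<lambda>k. \<rho> powr (c * real d ^ k))"
    by (rule pmf_expectation_sums[where Bd=1]) (rule powr_bound)
  define QQ where "QQ = measure_pmf.expectation p (\<lambda>k. \<rho> powr (c * real d ^ k)) + pmf p 0 * (1 - \<rho> powr c)"
  have SQ: "(\<lambda>k. pmf p k * (if k = 0 then 1 else \<rho> ^ (d ^ (k - 1) * Suc d))) sums QQ"
  proof -
    have "(\<lambda>k. pmf p k * \<rho> powr (c * real d ^ k) + (if k = 0 then pmf p 0 * (1 - \<rho> powr c) else 0)) sums QQ"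
      unfolding QQ_def by (rule sums_add[OF E2]) (rule sums_single)
    moreover have "pmf p k * \<rho> powr (c * real d ^ k) + (if k = 0 then pmf p 0 * (1 - \<rho> powr c) else 0)
        = pmf p k * (if k = 0 then 1 else \<rho> ^ (d ^ (k - 1) * Suc d))" for k
    proof (cases k)
      case 0 then show ?thesis by (simp add: algebra_simps)
    next
      case (Suc k')
      have "c * real d ^ k = real (d ^ (k - 1) * Suc d)"
        using Suc d by (simp add: c_def field_simps)
      then have "\<rho> powr (c * real d ^ k) = \<rho> ^ (d ^ (k - 1) * Suc d)"
        using powr_realpow[OF rho_pos, of "d ^ (k - 1) * Suc d"] by (simp only:)
      then show ?thesis using Suc by simp
    qed
    ultimately show ?thesis by simp
  qed
  have bn: "measure (cone_space p) {\<omega>. \<not> Groot d (Suc n) \<omega>} \<le> QQ" for n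
  proof (rule sums_le[OF _ PGroot SQ])
    fix k show "pmf p k * (if k = 0 then 1 else aa d p n ^ (d ^ (k - 1) * Suc d)) \<le> pmf p k * (if k = 0 then 1 else \<rho> ^ (d ^ (k - 1) * Suc d))"
      using aa_le[of n] aa_nonneg[of n] by (auto intro!: mult_left_mono power_mono)
  qed
  have gn: "1 - QQ \<le> measure (cone_space p) {\<omega>. Groot d (Suc n) \<omega>}" for n
    using bn[of n] measure_not[OF Groot_meas, of p d "Suc n"] by simp
  define A where "A = (\<lambda>n. {\<omega>. Groot d n \<omega>})"
  have Asets: "range A \<subseteq> sets (cone_space p)" using pred_sets[OF Groot_meas] by (auto simp: A_def)
  have dec: "decseq A" unfolding A_def
    by (rule decseq_SucI) (use d Groot_mono in auto)
  have lim: "(\<lambda>i. measure (cone_space p) (A i)) \<longlonglongrightarrow> measure (cone_space p) (\<Inter>i. A i)"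
    by (rule finite_Lim_measure_decseq[OF Asets dec])
  have "1 - QQ \<le> measure (cone_space p) (\<Inter>i. A i)"
  proof (rule LIMSEQ_le_const[OF lim], intro exI allI impI)
    fix n :: nat assume "1 \<le> n"
    then obtain m where nm: "n = Suc m" by (cases n) auto
    have An: "A n = {\<omega>. Groot d (Suc m) \<omega>}" using nm by (simp only: A_def)
    show "1 - QQ \<le> measure (cone_space p) (A n)" unfolding An by (rule gn)
  qed
  also have "\<dots> \<le> measure (cone_space p) (survival d p)"
  proof (rule finite_measure_mono[OF _ survival_sets])
    show "(\<Inter>i. A i) \<subseteq> survival d p" using Groot_survival by (auto simp: A_def)
  qed
  finally have "1 - QQ \<le> measure (cone_space p) (survival d p)" .
  moreover have "(\<lambda>k. \<rho> powr ((real d + 1) / real d * real d ^ k)) = (\<lambda>k. \<rho> powr (c * real d ^ k))"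
    by (simp add: c_def)
  ultimately show ?thesis by (simp add: QQ_def c_def algebra_simps)
qed

theorem corollary2:
  fixes d :: nat and p :: "nat pmf" and \<rho> \<psi> :: real
  assumes d: "d \<ge> 2"
    and p0: "0 < pmf p 0" "pmf p 0 < 1"
    and rho_nonneg: "\<rho> \<ge> 0"
    and rho_root: "measure_pmf.expectation p (\<lambda>k. \<rho> ^ (d ^ k)) + (1 - \<rho>) * pmf p 0 = \<rho>"
    and rho_least: "\<And>x. x \<ge> 0 \<Longrightarrow>
        measure_pmf.expectation p (\<lambda>k. x ^ (d ^ k)) + (1 - x) * pmf p 0 = x \<Longrightarrow> \<rho> \<le> x"
    and psi_nonneg: "\<psi> \<ge> 0"
    and psi_root: "measure_pmf.expectation p (\<lambda>k. \<psi> ^ (\<Sum>m=1..k. d ^ m)) = \<psi>"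
    and psi_least: "\<And>x. x \<ge> 0 \<Longrightarrow>
        measure_pmf.expectation p (\<lambda>k. x ^ (\<Sum>m=1..k. d ^ m)) = x \<Longrightarrow> \<psi> \<le> x"
  shows "1 - (1 - \<rho> powr ((real d + 1) / real d)) * pmf p 0
           - measure_pmf.expectation p (\<lambda>k. \<rho> powr ((real d + 1) / real d * real d ^ k))
         \<le> measure (cone_space p) (survival d p)
       \<and> measure (cone_space p) (survival d p)
         \<le> 1 - measure_pmf.expectation p
               (\<lambda>k. \<psi> powr ((real d + 1) / (real d - 1) * (real d ^ k - 1)))"
proof
  show "1 - (1 - \<rho> powr ((real d + 1) / real d)) * pmf p 0
           - measure_pmf.expectation p (\<lambda>k. \<rho> powr ((real d + 1) / real d * real d ^ k))
         \<le> measure (cone_space p) (survival d p)"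
    by (rule LB_main[OF d p0 rho_nonneg rho_root rho_least])
  show "measure (cone_space p) (survival d p)
         \<le> 1 - measure_pmf.expectation p
               (\<lambda>k. \<psi> powr ((real d + 1) / (real d - 1) * (real d ^ k - 1)))"
    by (rule UB_main[OF d p0(1) psi_nonneg psi_root psi_least])
qed

end
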